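(* Let $\Gamma$ be any simple graph and $d\geq 1$ an integer. Then $$\{|C| \;:\; C\subseteq V(\Gamma),\ d_\Gamma(C)=d\}=\{|C| \;:\; C\subseteq V(\Gamma),\ d_\Gamma(C)\geq d\},$$ where $d_\Gamma(C)=\min\{d_\Gamma(x,y)\;:\; x,y\in C,\ x\neq y\}$.
   Context: For a simple graph $\Gamma$, $d_\Gamma(x,y)$ denotes the length (number of edges) of a shortest path between vertices $x$ and $y$ of $\Gamma$. *)

theory Defs
  imports Main "HOL-Library.Extended_Nat"
begin

definition simple_graph :: "'a set \<Rightarrow> ('a \<Rightarrow> 'a \<Rightarrow> bool) \<Rightarrow> bool" where
  "simple_graph V E \<longleftrightarrow>
     (\<forall>x y. E x y \<longrightarrow> x \<in> V \<and> y \<in> V) \<and>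
     (\<forall>x y. E x y \<longrightarrow> E y x) \<and>
     (\<forall>x. \<not> E x x)"

definition graph_walk :: "'a set \<Rightarrow> ('a \<Rightarrow> 'a \<Rightarrow> bool) \<Rightarrow> 'a list \<Rightarrow> bool" where
  "graph_walk V E xs \<longleftrightarrow>
     xs \<noteq> [] \<and> set xs \<subseteq> V \<and> (\<forall>i. Suc i < length xs \<longrightarrow> E (xs ! i) (xs ! Suc i))"

definition gdist :: "'a set \<Rightarrow> ('a \<Rightarrow> 'a \<Rightarrow> bool) \<Rightarrow> 'a \<Rightarrow> 'a \<Rightarrow> enat" where
  "gdist V E x y =
     (INF xs \<in> {xs. graph_walk V E xs \<and> hd xs = x \<and> last xs = y}. enat (length xs - 1))"

definition connected_graph :: "'a set \<Rightarrow> ('a \<Rightarrow> 'a \<Rightarrow> bool) \<Rightarrow> bool" where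
  "connected_graph V E \<longleftrightarrow> (\<forall>x\<in>V. \<forall>y\<in>V. gdist V E x y \<noteq> \<infinity>)"

definition code_dist :: "'a set \<Rightarrow> ('a \<Rightarrow> 'a \<Rightarrow> bool) \<Rightarrow> 'a set \<Rightarrow> enat" where
  "code_dist V E C = (INF p \<in> {(x, y). x \<in> C \<and> y \<in> C \<and> x \<noteq> y}. gdist V E (fst p) (snd p))"

end

theory Submission
  imports Defs
begin

lemma walk_le:
  assumes "graph_walk V E xs"
  shows "gdist V E (hd xs) (last xs) \<le> enat (length xs - 1)"
  unfolding gdist_def using assms by (auto intro!: INF_lower)

lemma gdist_attained:
  assumes "gdist V E x y = enat n"
  shows "\<exists>xs. graph_walk V E xs \<and> hd xs = x \<and> last xs = y \<and> length xs = Suc n"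
proof -
  let ?S = "{xs. graph_walk V E xs \<and> hd xs = x \<and> last xs = y}"
  let ?f = "\<lambda>xs. enat (length xs - 1)"
  have ne: "?S \<noteq> {}" using assms unfolding gdist_def by (metis INF_empty enat.simps(3) top_enat_def)
  then obtain w where "w \<in> ?S" by blast
  hence "Inf (?f ` ?S) \<in> ?f ` ?S" by (intro wellorder_InfI) blast
  then obtain xs where xs: "xs \<in> ?S" "?f xs = gdist V E x y" unfolding gdist_def by auto
  then have "length xs - 1 = n" using assms by simp
  moreover have "xs \<noteq> []" using xs unfolding graph_walk_def by auto
  ultimately show ?thesis using xs by (intro exI[of _ xs]) auto
qed

lemma gdist_refl:
  assumes "v \<in> V" shows "gdist V E v v = 0"
proof -
  have "graph_walk V E [v]" using assms unfolding graph_walk_def by auto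
  from walk_le[OF this] show ?thesis by (simp add: zero_enat_def[symmetric])
qed

lemma gdist_sym_le:
  assumes "simple_graph V E"
  shows "gdist V E y x \<le> gdist V E x y"
proof (cases "gdist V E x y")
  case (enat n)
  then obtain xs where xs: "graph_walk V E xs" "hd xs = x" "last xs = y" "length xs = Suc n"
    using gdist_attained[OF enat] by blast
  have "graph_walk V E (rev xs)"
    unfolding graph_walk_def
  proof (intro conjI allI impI)
    show "rev xs \<noteq> []" "set (rev xs) \<subseteq> V" using xs(1) unfolding graph_walk_def by auto
    fix i assume i: "Suc i < length (rev xs)"
    define j where "j = length xs - Suc (Suc i)"
    have j1: "Suc j < length xs" and j2: "length xs - Suc i = Suc j" using i j_def by auto
    have "E (xs ! j) (xs ! Suc j)" using xs(1) j1 unfolding graph_walk_def by blast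
    then have "E (xs ! Suc j) (xs ! j)" using assms unfolding simple_graph_def by blast
    moreover have "rev xs ! i = xs ! Suc j" using i j2 by (simp add: rev_nth)
    moreover have "rev xs ! Suc i = xs ! j" using i j_def by (simp add: rev_nth)
    ultimately show "E (rev xs ! i) (rev xs ! Suc i)" by simp
  qed
  from walk_le[OF this] xs show ?thesis
    by (simp add: enat hd_rev last_rev)
qed simp

lemma gdist_sym:
  assumes "simple_graph V E"
  shows "gdist V E y x = gdist V E x y"
  using gdist_sym_le[OF assms] by (meson order_antisym)

lemma gdist_tri:
  assumes "simple_graph V E" "E x v"
  shows "gdist V E x z \<le> 1 + gdist V E v z"
proof (cases "gdist V E v z")
  case (enat n)
  then obtain xs where xs: "graph_walk V E xs" "hd xs = v" "last xs = z" "length xs = Suc n"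
    using gdist_attained[OF enat] by blast
  have "graph_walk V E (x # xs)"
    unfolding graph_walk_def
  proof (intro conjI allI impI)
    show "x # xs \<noteq> []" by simp
    show "set (x # xs) \<subseteq> V" using xs(1) assms unfolding graph_walk_def simple_graph_def by auto
    fix i assume i: "Suc i < length (x # xs)"
    show "E ((x # xs) ! i) ((x # xs) ! Suc i)"
    proof (cases i)
      case 0
      then show ?thesis using xs(2,4) assms(2) by (cases xs) auto
    next
      case (Suc j)
      then have "Suc j < length xs" using i by simp
      then have "E (xs ! j) (xs ! Suc j)" using xs(1) unfolding graph_walk_def by blast
      then show ?thesis using Suc by simp
    qed
  qed
  from walk_le[OF this] xs show ?thesis
    by (cases "xs = []") (simp_all add: enat one_enat_def)
qed simp

lemma gdist_step:
  assumes "simple_graph V E" "gdist V E x y = enat (Suc k)"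
  shows "\<exists>v. E x v \<and> gdist V E v y = enat k"
proof -
  obtain xs where xs: "graph_walk V E xs" "hd xs = x" "last xs = y" "length xs = Suc (Suc k)"
    using gdist_attained[OF assms(2)] by blast
  have E1: "E x (xs ! 1)" using xs unfolding graph_walk_def by (auto simp: hd_conv_nth)
  have "graph_walk V E (tl xs)" using xs unfolding graph_walk_def
    by (cases xs) (auto simp: nth_tl)
  from walk_le[OF this] xs have le: "gdist V E (xs ! 1) y \<le> enat k"
    by (cases xs) (auto simp: hd_conv_nth last_ConsR)
  have "enat (Suc k) \<le> 1 + gdist V E (xs ! 1) y"
    using gdist_tri[OF assms(1) E1, of y] assms(2) by simp
  with le have "gdist V E (xs ! 1) y = enat k"
    by (cases "gdist V E (xs ! 1) y") (auto simp: one_enat_def)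
  with E1 show ?thesis by blast
qed

lemma two_elems:
  assumes "2 \<le> card C" shows "\<exists>x y. x \<in> C \<and> y \<in> C \<and> x \<noteq> y"
proof -
  have "finite C" using assms card.infinite by fastforce
  then show ?thesis using assms card_le_Suc0_iff_eq[of C] by auto
qed

lemma code_dist_attained:
  assumes "x \<in> C" "y \<in> C" "x \<noteq> y"
  shows "\<exists>a b. a \<in> C \<and> b \<in> C \<and> a \<noteq> b \<and> code_dist V E C = gdist V E a b"
proof -
  let ?P = "{(x, y). x \<in> C \<and> y \<in> C \<and> x \<noteq> y}"
  let ?f = "\<lambda>p. gdist V E (fst p) (snd p)"
  have "(x, y) \<in> ?P" using assms by auto
  hence "Inf (?f ` ?P) \<in> ?f ` ?P" by (intro wellorder_InfI) blast
  then show ?thesis unfolding code_dist_def by (force simp: image_iff)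
qed

lemma code_dist_ge:
  assumes "\<And>a b. a \<in> C \<Longrightarrow> b \<in> C \<Longrightarrow> a \<noteq> b \<Longrightarrow> t \<le> gdist V E a b"
  shows "t \<le> code_dist V E C"
  unfolding code_dist_def using assms by (auto intro!: INF_greatest)

lemma code_dist_le:
  assumes "a \<in> C" "b \<in> C" "a \<noteq> b"
  shows "code_dist V E C \<le> gdist V E a b"
  unfolding code_dist_def using assms by (intro INF_lower2[of "(a,b)"]) auto

lemma reduce_step:
  assumes fin: "finite V" and sg: "simple_graph V E" and cn: "connected_graph V E"
    and CV: "C \<subseteq> V" and c2: "2 \<le> card C" and cd: "code_dist V E C = enat (Suc k)"
    and k1: "k \<ge> 1"
  shows "\<exists>C'. C' \<subseteq> V \<and> card C' = card C \<and> code_dist V E C' = enat k"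
proof -
  have finC: "finite C" using CV fin finite_subset by blast
  obtain x0 y0 where "x0 \<in> C" "y0 \<in> C" "x0 \<noteq> y0" using c2
    using two_elems by blast
  then obtain x y where xy: "x \<in> C" "y \<in> C" "x \<noteq> y" and dxy: "gdist V E x y = enat (Suc k)"
    using code_dist_attained[of x0 C y0 V E] cd by metis
  obtain v where v: "E x v" "gdist V E v y = enat k" using gdist_step[OF sg dxy] by blast
  have vV: "v \<in> V" using v(1) sg unfolding simple_graph_def by blast
  have yV: "y \<in> V" using xy CV by blast
  have allC: "enat (Suc k) \<le> gdist V E a b" if "a \<in> C" "b \<in> C" "a \<noteq> b" for a b
    using code_dist_le[OF that, of V E] cd by simp
  have vy: "v \<noteq> y" using v(2) gdist_refl[OF yV, of E] k1 by (auto simp: zero_enat_def)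
  have vC: "v \<notin> C - {x}"
  proof
    assume "v \<in> C - {x}"
    then show False using vy allC[of v y] xy v(2) by auto
  qed
  define C' where "C' = insert v (C - {x})"
  have C'V: "C' \<subseteq> V" using CV vV C'_def by auto
  have cardC': "card C' = card C" using vC finC xy unfolding C'_def
    by (simp add: card_Diff_singleton) (metis One_nat_def Suc_pred card_gt_0_iff emptyE)
  have dv: "enat k \<le> gdist V E v z" if "z \<in> C - {x}" for z
  proof -
    have "enat (Suc k) \<le> gdist V E x z" using allC[of x z] that xy by auto
    also have "\<dots> \<le> 1 + gdist V E v z" by (rule gdist_tri[OF sg v(1)])
    finally show ?thesis
      by (cases "gdist V E v z") (auto simp: one_enat_def)
  qed
  have ge: "enat k \<le> code_dist V E C'"
  proof (rule code_dist_ge)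
    fix a b assume ab: "a \<in> C'" "b \<in> C'" "a \<noteq> b"
    show "enat k \<le> gdist V E a b"
    proof (cases "a = v")
      case True
      then show ?thesis using ab dv C'_def by auto
    next
      case False
      note aF = False
      show ?thesis
      proof (cases "b = v")
        case True
        then show ?thesis using ab dv[of a] aF C'_def gdist_sym[OF sg, of a v] by auto
      next
        case False
        then have "enat (Suc k) \<le> gdist V E a b" using ab aF allC C'_def by auto
        then show ?thesis by (meson Suc_n_not_le_n enat_ord_simps(1) nle_le order_trans)
      qed
    qed
  qed
  have le: "code_dist V E C' \<le> enat k"
    using code_dist_le[of v C' y V E] v(2) vy xy C'_def by auto
  show ?thesis using ge le C'V cardC' by (intro exI[of _ C']) auto
qed

lemma reduce:
  assumes fin: "finite V" and sg: "simple_graph V E" and cn: "connected_graph V E"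
    and d1: "d \<ge> 1"
  shows "C \<subseteq> V \<Longrightarrow> 2 \<le> card C \<Longrightarrow> code_dist V E C = enat (d + m) \<Longrightarrow>
    \<exists>C'. C' \<subseteq> V \<and> card C' = card C \<and> code_dist V E C' = enat d"
proof (induction m arbitrary: C)
  case 0
  then show ?case by auto
next
  case (Suc m)
  then obtain C' where C': "C' \<subseteq> V" "card C' = card C" "code_dist V E C' = enat (d + m)"
    using reduce_step[OF fin sg cn Suc.prems(1,2), of "d + m"] d1 by auto
  then show ?case using Suc.IH[of C'] Suc.prems by auto
qed

theorem proposition2p1:
  fixes V :: "'a set" and E :: "'a \<Rightarrow> 'a \<Rightarrow> bool" and d :: nat
  assumes "finite V" and "simple_graph V E" and "connected_graph V E" and "d \<ge> 1"
  shows "{card C | C. C \<subseteq> V \<and> 2 \<le> card C \<and> code_dist V E C = enat d}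
       = {card C | C. C \<subseteq> V \<and> 2 \<le> card C \<and> code_dist V E C \<ge> enat d}"
proof
  show "{card C | C. C \<subseteq> V \<and> 2 \<le> card C \<and> code_dist V E C = enat d}
       \<subseteq> {card C | C. C \<subseteq> V \<and> 2 \<le> card C \<and> code_dist V E C \<ge> enat d}" by auto
next
  show "{card C | C. C \<subseteq> V \<and> 2 \<le> card C \<and> code_dist V E C \<ge> enat d}
       \<subseteq> {card C | C. C \<subseteq> V \<and> 2 \<le> card C \<and> code_dist V E C = enat d}"
  proof
    fix n assume "n \<in> {card C | C. C \<subseteq> V \<and> 2 \<le> card C \<and> code_dist V E C \<ge> enat d}"
    then obtain C where C: "C \<subseteq> V" "2 \<le> card C" "code_dist V E C \<ge> enat d" "n = card C"
      by blast
    obtain x0 y0 where xy: "x0 \<in> C" "y0 \<in> C" "x0 \<noteq> y0" using C(2)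
      using two_elems by blast
    have "code_dist V E C \<le> gdist V E x0 y0" by (rule code_dist_le[OF xy])
    moreover have "gdist V E x0 y0 \<noteq> \<infinity>" using assms(3) xy C(1)
      unfolding connected_graph_def by blast
    ultimately obtain D where D: "code_dist V E C = enat D"
      by (cases "code_dist V E C") auto
    with C(3) obtain m where "D = d + m" by (metis enat_ord_simps(1) le_Suc_ex)
    then obtain C' where "C' \<subseteq> V" "card C' = card C" "code_dist V E C' = enat d"
      using reduce[OF assms, of C m] C D by auto
    then show "n \<in> {card C | C. C \<subseteq> V \<and> 2 \<le> card C \<and> code_dist V E C = enat d}"
      using C by (metis (mono_tags, lifting) mem_Collect_eq)
  qed
qed

end
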